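(* With respect to the operator norm induced by the entrywise $\ell_1$-norm $\|C\|=\sum_{x,y\in E}|C(x,y)|$ on $\mathsf M_E$, i.e. $|||S|||=\max\{\|S(C)\|:\|C\|=1\}$, we have (i) $|||L|||=1$ and (ii) $|||L-I|||\le 4/N$ (here $I$ denotes the identity operator on $\mathsf M_E$).
   Context: $E$ is a finite set with $N=\#E>8$ elements, listed in a fixed order; $\mathsf M_E$ is the space of complex $N\times N$ matrices indexed by $E\times E$. $|x\rangle$ (resp. $\langle x|$) is the column (resp. row) vector with 1 in coordinate $x$ and 0 elsewhere; $C^*$ denotes transpose. $Q$ is an irreducible stochastic matrix on $E$ with $Q(x,y)=Q(y,x)$ for all $x,y$ and $\mathrm{tr}(Q)=0$. Let $(U,V)$ be a random pair in $E\times E$ with $\mathbb P(U=x,V=y)=\frac1NQ(x,y)$ and $T=I-|U\rangle\langle U|+|U\rangle\langle V|$ ($I$ the identity matrix); the linear operator $L:\mathsf M_E\to\mathsf M_E$ is $L(C)=\mathbb E[T^*CT]$. *)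

theory Defs
  imports "HOL-Analysis.Analysis"
begin

text \<open>Basis column/row vectors: |x> as an E x 1 matrix and <x| as a 1 x E matrix,
  represented as square matrices via the outer product |x><y|.\<close>
definition ketbra :: "'e::finite \<Rightarrow> 'e \<Rightarrow> complex^'e^'e" where
  "ketbra x y = (\<chi> i j. if i = x \<and> j = y then 1 else 0)"

definition Tmat :: "'e::finite \<Rightarrow> 'e \<Rightarrow> complex^'e^'e" where
  "Tmat x y = mat 1 - ketbra x x + ketbra x y"

primrec matpow :: "real^'e::finite^'e \<Rightarrow> nat \<Rightarrow> real^'e^'e" where
  "matpow A 0 = mat 1"
| "matpow A (Suc n) = matpow A n ** A"

definition irreducible_mat :: "real^'e^'e \<Rightarrow> bool" where
  "irreducible_mat Q \<longleftrightarrow> (\<forall>x y. \<exists>n\<ge>1. (matpow Q n) $ x $ y > 0)"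

definition stochastic_mat :: "real^'e^'e \<Rightarrow> bool" where
  "stochastic_mat Q \<longleftrightarrow> (\<forall>x y. Q $ x $ y \<ge> 0) \<and> (\<forall>x. (\<Sum>y\<in>UNIV. Q $ x $ y) = 1)"

text \<open>L(C) = E[T^* C T] with P(U=x,V=y) = Q(x,y)/N, T = T_{UV}; C^* is the transpose.\<close>
definition Lop :: "real^'e::finite^'e \<Rightarrow> complex^'e^'e \<Rightarrow> complex^'e^'e" where
  "Lop Q C = (\<Sum>x\<in>UNIV. \<Sum>y\<in>UNIV.
      (Q $ x $ y / real CARD('e)) *\<^sub>R (transpose (Tmat x y) ** C ** Tmat x y))"

definition l1norm :: "complex^'e::finite^'e \<Rightarrow> real" where
  "l1norm C = (\<Sum>x\<in>UNIV. \<Sum>y\<in>UNIV. cmod (C $ x $ y))"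

definition opnorm1 :: "(complex^'e::finite^'e \<Rightarrow> complex^'e^'e) \<Rightarrow> real" where
  "opnorm1 S = Sup ((\<lambda>C. l1norm (S C)) ` {C. l1norm C = 1})"

end

theory Submission
  imports Defs
begin

definition fxy :: "'e \<Rightarrow> 'e \<Rightarrow> 'e \<Rightarrow> 'e" where
  "fxy x y a = (if a = x then y else a)"

definition pushE :: "('e::finite \<Rightarrow> 'e) \<Rightarrow> complex^'e^'e \<Rightarrow> 'e \<Rightarrow> 'e \<Rightarrow> complex" where
  "pushE f C i j = (\<Sum>a\<in>UNIV. \<Sum>b\<in>UNIV. if f a = i \<and> f b = j then C$a$b else 0)"

lemma Tmat_entry: "Tmat x y $ a $ i = (if fxy x y a = i then 1 else 0)"
  by (auto simp: Tmat_def ketbra_def mat_def fxy_def)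

lemma TCT_entry:
  "(transpose (Tmat x y) ** C ** Tmat x y) $ i $ j = pushE (fxy x y) C i j"
proof -
  have "(transpose (Tmat x y) ** C ** Tmat x y) $ i $ j =
     (\<Sum>b\<in>UNIV. (\<Sum>a\<in>UNIV. (if fxy x y a = i then 1 else 0) * C$a$b) * (if fxy x y b = j then 1 else 0))"
    by (simp add: matrix_matrix_mult_def transpose_def Tmat_entry)
  also have "\<dots> = (\<Sum>b\<in>UNIV. \<Sum>a\<in>UNIV. if fxy x y a = i \<and> fxy x y b = j then C$a$b else 0)"
    by (simp add: sum_distrib_right if_distrib cong: if_cong) (auto intro!: sum.cong)
  also have "\<dots> = pushE (fxy x y) C i j"
    unfolding pushE_def by (rule sum.swap)
  finally show ?thesis .
qed

lemma Lop_entry: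
  fixes C :: "complex^'e::finite^'e"
  shows "Lop Q C $ i $ j = (\<Sum>x\<in>UNIV. \<Sum>y\<in>UNIV. complex_of_real (Q$x$y / real CARD('e)) * pushE (fxy x y) C i j)"
  unfolding Lop_def by (simp add: TCT_entry vector_scaleR_component del: scaleR_conv_of_real) (simp add: scaleR_conv_of_real)

lemma swap4: "(\<Sum>i\<in>A. \<Sum>j\<in>B. \<Sum>a\<in>C. \<Sum>b\<in>D. g i j a b) = (\<Sum>a\<in>C. \<Sum>b\<in>D. \<Sum>i\<in>A. \<Sum>j\<in>B. g i j a b)"
proof -
  have "(\<Sum>i\<in>A. \<Sum>j\<in>B. \<Sum>a\<in>C. \<Sum>b\<in>D. g i j a b) = (\<Sum>i\<in>A. \<Sum>a\<in>C. \<Sum>j\<in>B. \<Sum>b\<in>D. g i j a b)"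
    by (rule sum.cong[OF refl], rule sum.swap)
  also have "\<dots> = (\<Sum>a\<in>C. \<Sum>i\<in>A. \<Sum>j\<in>B. \<Sum>b\<in>D. g i j a b)"
    by (rule sum.swap)
  also have "\<dots> = (\<Sum>a\<in>C. \<Sum>i\<in>A. \<Sum>b\<in>D. \<Sum>j\<in>B. g i j a b)"
    by (rule sum.cong[OF refl], rule sum.cong[OF refl], rule sum.swap)
  also have "\<dots> = (\<Sum>a\<in>C. \<Sum>b\<in>D. \<Sum>i\<in>A. \<Sum>j\<in>B. g i j a b)"
    by (rule sum.cong[OF refl], rule sum.swap)
  finally show ?thesis .
qed

lemma delta2: "(\<Sum>i\<in>(UNIV::'a::finite set). \<Sum>j\<in>(UNIV::'a set). if p = i \<and> q = j then c else 0) = (c::'b::comm_monoid_add)"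
proof -
  have "\<And>i. (\<Sum>j\<in>(UNIV::'a set). if p = i \<and> q = j then c else 0) = (if p = i then c else 0)"
    by (cases "p = i") auto
  then show ?thesis by simp
qed

lemma pushE_norm: "(\<Sum>i\<in>UNIV. \<Sum>j\<in>UNIV. cmod (pushE f C i j)) \<le> l1norm C"
proof -
  have "(\<Sum>i\<in>UNIV. \<Sum>j\<in>UNIV. cmod (pushE f C i j)) \<le>
    (\<Sum>i\<in>UNIV. \<Sum>j\<in>UNIV. \<Sum>a\<in>UNIV. \<Sum>b\<in>UNIV. if f a = i \<and> f b = j then cmod (C$a$b) else 0)"
    unfolding pushE_def
    apply (intro sum_mono)
    apply (rule order_trans[OF norm_sum sum_mono])
    apply (rule order_trans[OF norm_sum sum_mono])
    by simp
  also have "\<dots> = (\<Sum>a\<in>UNIV. \<Sum>b\<in>UNIV. \<Sum>i\<in>UNIV. \<Sum>j\<in>UNIV. if f a = i \<and> f b = j then cmod (C$a$b) else 0)"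
    by (rule swap4)
  also have "\<dots> = l1norm C"
    unfolding l1norm_def by (simp only: delta2)
  finally show ?thesis .
qed

lemma delta2': "C$i$j = (\<Sum>a\<in>UNIV. \<Sum>b\<in>UNIV. if a = i \<and> b = j then C$a$b else (0::complex))"
proof -
  have "\<And>a. (\<Sum>b\<in>UNIV. if a = i \<and> b = j then C$a$b else (0::complex)) = (if a = i then C$a$j else 0)"
    by (cases "a = i") auto
  then show ?thesis by simp
qed

lemma pushdiff_norm:
  fixes C :: "complex^'e::finite^'e"
  shows "(\<Sum>i\<in>UNIV. \<Sum>j\<in>UNIV. cmod (pushE (fxy x y) C i j - C$i$j))
     \<le> 2 * ((\<Sum>b\<in>UNIV. cmod (C$x$b)) + (\<Sum>a\<in>UNIV. cmod (C$a$x)))"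
proof -
  let ?f = "fxy x y"
  have s1: "pushE ?f C i j - C$i$j = (\<Sum>a\<in>UNIV. \<Sum>b\<in>UNIV. if a = x \<or> b = x then
      ((if ?f a = i \<and> ?f b = j then C$a$b else 0) - (if a = i \<and> b = j then C$a$b else 0)) else 0)" for i j
    unfolding pushE_def
    apply (subst delta2'[of C i j])
    apply (simp only: sum_subtractf[symmetric])
    apply (intro sum.cong refl)
    by (auto simp: fxy_def)
  have s2: "cmod (pushE ?f C i j - C$i$j) \<le> (\<Sum>a\<in>UNIV. \<Sum>b\<in>UNIV. if a = x \<or> b = x then
      ((if ?f a = i \<and> ?f b = j then cmod (C$a$b) else 0) + (if a = i \<and> b = j then cmod (C$a$b) else 0)) else 0)" for i j
    unfolding s1
    apply (rule order_trans[OF norm_sum sum_mono])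
    apply (rule order_trans[OF norm_sum sum_mono])
    by (auto intro: order_trans[OF norm_triangle_ineq4])
  have "(\<Sum>i\<in>UNIV. \<Sum>j\<in>UNIV. cmod (pushE ?f C i j - C$i$j)) \<le>
     (\<Sum>i\<in>UNIV. \<Sum>j\<in>UNIV. \<Sum>a\<in>UNIV. \<Sum>b\<in>UNIV. if a = x \<or> b = x then
      ((if ?f a = i \<and> ?f b = j then cmod (C$a$b) else 0) + (if a = i \<and> b = j then cmod (C$a$b) else 0)) else 0)"
    by (intro sum_mono s2)
  also have "\<dots> = (\<Sum>a\<in>UNIV. \<Sum>b\<in>UNIV. \<Sum>i\<in>UNIV. \<Sum>j\<in>UNIV. if a = x \<or> b = x then
      ((if ?f a = i \<and> ?f b = j then cmod (C$a$b) else 0) + (if a = i \<and> b = j then cmod (C$a$b) else 0)) else 0)"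
    by (rule swap4)
  also have "\<dots> = (\<Sum>a\<in>UNIV. \<Sum>b\<in>UNIV. if a = x \<or> b = x then 2 * cmod (C$a$b) else 0)"
  proof (intro sum.cong refl)
    fix a b
    show "(\<Sum>i\<in>UNIV. \<Sum>j\<in>UNIV. if a = x \<or> b = x then
      ((if ?f a = i \<and> ?f b = j then cmod (C$a$b) else 0) + (if a = i \<and> b = j then cmod (C$a$b) else 0)) else 0)
      = (if a = x \<or> b = x then 2 * cmod (C$a$b) else 0)"
    proof (cases "a = x \<or> b = x")
      case True
      then show ?thesis by (simp add: sum.distrib delta2)
    qed simp
  qed
  also have "\<dots> \<le> (\<Sum>a\<in>UNIV. \<Sum>b\<in>UNIV. 2 * ((if a = x then cmod (C$a$b) else 0) + (if b = x then cmod (C$a$b) else 0)))"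
    by (intro sum_mono) auto
  also have "\<dots> = 2 * ((\<Sum>b\<in>UNIV. cmod (C$x$b)) + (\<Sum>a\<in>UNIV. cmod (C$a$x)))"
    by (simp add: sum.distrib sum_distrib_left[symmetric] sum.swap[of "\<lambda>a b. if a = x then _ a b else 0"])
  finally show ?thesis .
qed

lemma sumQ:
  fixes Q :: "real^'e::finite^'e"
  assumes "stochastic_mat Q"
  shows "(\<Sum>x\<in>UNIV. \<Sum>y\<in>UNIV. Q$x$y / real CARD('e)) = 1"
  using assms unfolding stochastic_mat_def
  by (simp add: sum_divide_distrib[symmetric])

lemma Lbound:
  fixes Q :: "real^'e::finite^'e"
  assumes "stochastic_mat Q"
  shows "l1norm (Lop Q C) \<le> l1norm C"
proof -
  have nn: "Q$x$y \<ge> 0" for x y using assms unfolding stochastic_mat_def by auto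
  have "l1norm (Lop Q C) \<le> (\<Sum>i\<in>UNIV. \<Sum>j\<in>UNIV. \<Sum>x\<in>UNIV. \<Sum>y\<in>UNIV.
      Q$x$y / real CARD('e) * cmod (pushE (fxy x y) C i j))"
    unfolding l1norm_def Lop_entry
    apply (intro sum_mono)
    apply (rule order_trans[OF norm_sum sum_mono])
    apply (rule order_trans[OF norm_sum sum_mono])
    by (simp only: norm_mult norm_of_real, simp add: nn)
  also have "\<dots> = (\<Sum>x\<in>UNIV. \<Sum>y\<in>UNIV. Q$x$y / real CARD('e) *
      (\<Sum>i\<in>UNIV. \<Sum>j\<in>UNIV. cmod (pushE (fxy x y) C i j)))"
    by (subst swap4) (simp add: sum_distrib_left)
  also have "\<dots> \<le> (\<Sum>x\<in>UNIV. \<Sum>y\<in>UNIV. Q$x$y / real CARD('e) * l1norm C)"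
    by (intro sum_mono mult_left_mono pushE_norm) (simp add: nn)
  also have "\<dots> = (\<Sum>x\<in>UNIV. \<Sum>y\<in>UNIV. Q$x$y / real CARD('e)) * l1norm C"
    by (simp only: sum_distrib_right)
  also have "\<dots> = l1norm C"
    using sumQ[OF assms] by simp
  finally show ?thesis .
qed

lemma Dbound:
  fixes Q :: "real^'e::finite^'e"
  assumes "stochastic_mat Q"
  shows "l1norm (Lop Q C - C) \<le> 4 / real CARD('e) * l1norm C"
proof -
  have nn: "Q$x$y \<ge> 0" for x y using assms unfolding stochastic_mat_def by auto
  have rs: "(\<Sum>y\<in>UNIV. Q$x$y) = 1" for x using assms unfolding stochastic_mat_def by auto
  have sq: "(\<Sum>x\<in>UNIV. \<Sum>y\<in>UNIV. complex_of_real (Q$x$y / real CARD('e))) = 1"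
  proof -
    have "complex_of_real (\<Sum>x\<in>UNIV. \<Sum>y\<in>UNIV. Q$x$y / real CARD('e)) = 1"
      using sumQ[OF assms] by simp
    then show ?thesis by (simp only: of_real_sum)
  qed
  have ent: "(Lop Q C - C) $ i $ j = (\<Sum>x\<in>UNIV. \<Sum>y\<in>UNIV.
      complex_of_real (Q$x$y / real CARD('e)) * (pushE (fxy x y) C i j - C$i$j))" for i j
  proof -
    have e: "C$i$j = (\<Sum>x\<in>UNIV. \<Sum>y\<in>UNIV. complex_of_real (Q$x$y / real CARD('e)) * C$i$j)"
      using sq by (simp only: sum_distrib_right[symmetric] mult_1_left)
    have "(Lop Q C - C) $ i $ j = Lop Q C $ i $ j - C$i$j" by simp
    also have "\<dots> = (\<Sum>x\<in>UNIV. \<Sum>y\<in>UNIV. complex_of_real (Q$x$y / real CARD('e)) * pushE (fxy x y) C i j)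
       - (\<Sum>x\<in>UNIV. \<Sum>y\<in>UNIV. complex_of_real (Q$x$y / real CARD('e)) * C$i$j)"
      by (subst e, subst Lop_entry, rule refl)
    also have "\<dots> = (\<Sum>x\<in>UNIV. \<Sum>y\<in>UNIV.
      complex_of_real (Q$x$y / real CARD('e)) * (pushE (fxy x y) C i j - C$i$j))"
      by (simp only: right_diff_distrib sum_subtractf)
    finally show ?thesis .
  qed
  have "l1norm (Lop Q C - C) \<le> (\<Sum>i\<in>UNIV. \<Sum>j\<in>UNIV. \<Sum>x\<in>UNIV. \<Sum>y\<in>UNIV.
      Q$x$y / real CARD('e) * cmod (pushE (fxy x y) C i j - C$i$j))"
    unfolding l1norm_def ent
    apply (intro sum_mono)
    apply (rule order_trans[OF norm_sum sum_mono])
    apply (rule order_trans[OF norm_sum sum_mono])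
    by (simp only: norm_mult norm_of_real, simp add: nn)
  also have "\<dots> = (\<Sum>x\<in>UNIV. \<Sum>y\<in>UNIV. Q$x$y / real CARD('e) *
      (\<Sum>i\<in>UNIV. \<Sum>j\<in>UNIV. cmod (pushE (fxy x y) C i j - C$i$j)))"
    by (subst swap4) (simp add: sum_distrib_left)
  also have "\<dots> \<le> (\<Sum>x\<in>UNIV. \<Sum>y\<in>UNIV. Q$x$y / real CARD('e) *
      (2 * ((\<Sum>b\<in>UNIV. cmod (C$x$b)) + (\<Sum>a\<in>UNIV. cmod (C$a$x)))))"
    by (intro sum_mono mult_left_mono pushdiff_norm) (simp add: nn)
  also have "\<dots> = (\<Sum>x\<in>UNIV. 2 / real CARD('e) *
      ((\<Sum>b\<in>UNIV. cmod (C$x$b)) + (\<Sum>a\<in>UNIV. cmod (C$a$x))))"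
  proof (rule sum.cong[OF refl])
    fix x :: 'e
    let ?W = "2 / real CARD('e) * ((\<Sum>b\<in>UNIV. cmod (C$x$b)) + (\<Sum>a\<in>UNIV. cmod (C$a$x)))"
    have "(\<Sum>y\<in>UNIV. Q$x$y / real CARD('e) *
      (2 * ((\<Sum>b\<in>UNIV. cmod (C$x$b)) + (\<Sum>a\<in>UNIV. cmod (C$a$x)))))
      = (\<Sum>y\<in>UNIV. Q$x$y * ?W)"
      by (intro sum.cong refl) (simp add: field_simps)
    also have "\<dots> = (\<Sum>y\<in>UNIV. Q$x$y) * ?W" by (simp only: sum_distrib_right)
    also have "\<dots> = ?W" by (simp add: rs)
    finally show "(\<Sum>y\<in>UNIV. Q$x$y / real CARD('e) *
      (2 * ((\<Sum>b\<in>UNIV. cmod (C$x$b)) + (\<Sum>a\<in>UNIV. cmod (C$a$x))))) = ?W" .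
  qed
  also have "\<dots> = 2 / real CARD('e) * (l1norm C + l1norm C)"
  proof -
    have K: "(\<Sum>x\<in>UNIV. \<Sum>a\<in>UNIV. cmod (C$a$x)) = l1norm C"
      unfolding l1norm_def by (rule sum.swap)
    show ?thesis
      by (simp only: sum_distrib_left[symmetric] sum.distrib K, simp add: l1norm_def)
  qed
  also have "\<dots> = 4 / real CARD('e) * l1norm C" by simp
  finally show ?thesis .
qed

lemma pushE_ketbra: "pushE f (ketbra z z) i j = (if f z = i \<and> f z = j then 1 else 0)"
proof -
  have "pushE f (ketbra z z) i j = (\<Sum>a\<in>UNIV. \<Sum>b\<in>UNIV. if a = z then (if b = z then
     (if f z = i \<and> f z = j then 1 else 0) else 0) else 0)"
    unfolding pushE_def ketbra_def by (intro sum.cong refl) auto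
  also have "\<dots> = (\<Sum>a\<in>UNIV. if a = z then (if f z = i \<and> f z = j then 1 else 0) else 0)"
    by (intro sum.cong refl) simp
  also have "\<dots> = (if f z = i \<and> f z = j then 1 else 0)" by simp
  finally show ?thesis .
qed

lemma l1_ketbra: "l1norm (ketbra (z::'e::finite) z) = 1"
proof -
  have "l1norm (ketbra z z) = (\<Sum>i\<in>UNIV. \<Sum>j\<in>UNIV. if z = i \<and> z = j then (1::real) else 0)"
    unfolding l1norm_def ketbra_def by (intro sum.cong refl) auto
  then show ?thesis by (simp only: delta2)
qed

lemma L_ketbra:
  fixes Q :: "real^'e::finite^'e"
  assumes "stochastic_mat Q"
  shows "l1norm (Lop Q (ketbra z z)) = 1"
proof -
  have nn: "Q$x$y \<ge> 0" for x y using assms unfolding stochastic_mat_def by auto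
  define r where "r i j = (\<Sum>x\<in>UNIV. \<Sum>y\<in>UNIV. Q$x$y / real CARD('e) *
     (if fxy x y z = i \<and> fxy x y z = j then 1 else 0))" for i j
  have e: "Lop Q (ketbra z z) $ i $ j = complex_of_real (r i j)" for i j
    unfolding Lop_entry pushE_ketbra r_def of_real_sum by (intro sum.cong refl) auto
  have rnn: "r i j \<ge> 0" for i j unfolding r_def by (intro sum_nonneg) (simp add: nn)
  have "l1norm (Lop Q (ketbra z z)) = (\<Sum>i\<in>UNIV. \<Sum>j\<in>UNIV. r i j)"
    unfolding l1norm_def e using rnn by simp
  also have "\<dots> = (\<Sum>x\<in>UNIV. \<Sum>y\<in>UNIV. \<Sum>i\<in>UNIV. \<Sum>j\<in>UNIV. Q$x$y / real CARD('e) *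
     (if fxy x y z = i \<and> fxy x y z = j then 1 else 0))"
    unfolding r_def by (rule swap4)
  also have "\<dots> = (\<Sum>x\<in>UNIV. \<Sum>y\<in>UNIV. Q$x$y / real CARD('e))"
    by (simp only: sum_distrib_left[symmetric] delta2 mult_1_right)
  also have "\<dots> = 1" by (rule sumQ[OF assms])
  finally show ?thesis .
qed

theorem proposition2p3:
  fixes Q :: "real^'e::finite^'e"
  assumes "CARD('e) > 8"
    and "stochastic_mat Q"
    and "irreducible_mat Q"
    and "\<forall>x y. Q $ x $ y = Q $ y $ x"
    and "trace Q = 0"
  shows "opnorm1 (Lop Q) = 1 \<and> opnorm1 (\<lambda>C. Lop Q C - C) \<le> 4 / real CARD('e)"
proof
  show "opnorm1 (Lop Q) = 1"
    unfolding opnorm1_def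
  proof (rule cSup_eq_maximum)
    show "1 \<in> (\<lambda>C. l1norm (Lop Q C)) ` {C. l1norm C = 1}"
      using L_ketbra[OF assms(2), of undefined] l1_ketbra[of undefined]
      by (metis (mono_tags, lifting) image_eqI mem_Collect_eq)
    show "\<And>x. x \<in> (\<lambda>C. l1norm (Lop Q C)) ` {C. l1norm C = 1} \<Longrightarrow> x \<le> 1"
    proof -
      fix x assume "x \<in> (\<lambda>C. l1norm (Lop Q C)) ` {C. l1norm C = 1}"
      then obtain C where "l1norm C = 1" "x = l1norm (Lop Q C)" by blast
      then show "x \<le> 1" using Lbound[OF assms(2), of C] by simp
    qed
  qed
  show "opnorm1 (\<lambda>C. Lop Q C - C) \<le> 4 / real CARD('e)"
    unfolding opnorm1_def
  proof (rule cSup_least)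
    show "(\<lambda>C. l1norm (Lop Q C - C)) ` {C. l1norm C = 1} \<noteq> {}"
      using l1_ketbra[of undefined] by blast
    show "\<And>x. x \<in> (\<lambda>C. l1norm (Lop Q C - C)) ` {C. l1norm C = 1} \<Longrightarrow> x \<le> 4 / real CARD('e)"
    proof -
      fix x assume "x \<in> (\<lambda>C. l1norm (Lop Q C - C)) ` {C. l1norm C = 1}"
      then obtain C where "l1norm C = 1" "x = l1norm (Lop Q C - C)" by blast
      then show "x \<le> 4 / real CARD('e)" using Dbound[OF assms(2), of C] by simp
    qed
  qed
qed

end
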